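(* Let $a,b$ be integers with $0<b<a$, let $S=\langle a,a+1,\ldots,a+b\rangle$ with conductor $c$, and let $m\ge 2c-1$. Let $0=i_0<i_1<\cdots<i_t<a+b$ be integers. Then $$\sharp\mathrm D(m,m+i_1,\ldots,m+i_t)\ge\sharp\mathrm D(m,m+1,\ldots,m+t).$$
   Context: The conductor $c$ of a numerical semigroup $S$ is the least element of $S$ with $c+n\in S$ for all $n\in\mathbb N$. For $x\in S$, $\mathrm D(x)=\{\alpha\in S\mid x-\alpha\in S\}$, and $\mathrm D(x_1,\ldots,x_t)=\mathrm D(x_1)\cup\cdots\cup\mathrm D(x_t)$. *)

theory Defs
  imports Main
begin

inductive_set monoid_gen :: "nat set \<Rightarrow> nat set" for G :: "nat set" where
  zero: "0 \<in> monoid_gen G"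
| add: "g \<in> G \<Longrightarrow> x \<in> monoid_gen G \<Longrightarrow> g + x \<in> monoid_gen G"

definition interval_semigroup :: "nat \<Rightarrow> nat \<Rightarrow> nat set" where
  "interval_semigroup a b = monoid_gen {a..a+b}"

definition conductor :: "nat set \<Rightarrow> nat" where
  "conductor S = (LEAST c. c \<in> S \<and> (\<forall>n. c + n \<in> S))"

text \<open>D(x) = {alpha in S | x - alpha in S} (integer subtraction, so alpha <= x).\<close>
definition Dset :: "nat set \<Rightarrow> nat \<Rightarrow> nat set" where
  "Dset S x = {\<alpha> \<in> S. \<alpha> \<le> x \<and> x - \<alpha> \<in> S}"

definition Dmulti :: "nat set \<Rightarrow> nat set \<Rightarrow> nat set" where
  "Dmulti S X = (\<Union>x\<in>X. Dset S x)"

end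

theory Submission
  imports Defs
begin


lemma mem_S: "z \<in> interval_semigroup a b \<longleftrightarrow> (\<exists>n. n*a \<le> z \<and> z \<le> n*(a+b))"
proof
  assume "z \<in> interval_semigroup a b"
  then show "\<exists>n. n*a \<le> z \<and> z \<le> n*(a+b)" unfolding interval_semigroup_def
  proof (induction rule: monoid_gen.induct)
    case zero then show ?case by auto
  next
    case (add g x)
    then obtain n where "n*a \<le> x" "x \<le> n*(a+b)" by auto
    with add(1) have "Suc n * a \<le> g + x \<and> g + x \<le> Suc n * (a+b)" by auto
    then show ?case by blast
  qed
next
  assume "\<exists>n. n*a \<le> z \<and> z \<le> n*(a+b)"
  then obtain n where "n*a \<le> z" "z \<le> n*(a+b)" by auto
  then show "z \<in> interval_semigroup a b" unfolding interval_semigroup_def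
  proof (induction n arbitrary: z)
    case 0 then show ?case using monoid_gen.zero by auto
  next
    case (Suc n)
    define g where "g = min (a+b) (z - n*a)"
    have h1: "a + n*a \<le> z" "z \<le> (a+b) + n*(a+b)" using Suc.prems by auto
    have g: "g \<in> {a..a+b}" using h1 by (auto simp: g_def)
    have na: "n*a \<le> n*(a+b)" by simp
    have "n*a \<le> z - g" "z - g \<le> n*(a+b)" using h1 na unfolding g_def min_def by (auto split: if_splits)
    then have "z - g \<in> monoid_gen {a..a+b}" using Suc.IH by auto
    from monoid_gen.add[OF g this] have "g + (z - g) \<in> monoid_gen {a..a+b}" .
    moreover have "g + (z - g) = z" using h1 by (auto simp: g_def)
    ultimately show ?case by simp
  qed
qed

lemma notS:
  assumes "0 < a"
  shows "z \<notin> interval_semigroup a b \<longleftrightarrow>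
     (0 < z mod (a+b) \<and> z mod (a+b) + z div (a+b) * b < a)"
proof -
  define P where "P = a + b"
  define q where "q = z div P"
  define r where "r = z mod P"
  have z: "z = q*a + q*b + r" unfolding q_def r_def P_def
    by (metis add_mult_distrib2 div_mult_mod_eq mult.commute)
  have rP: "r < a + b" unfolding r_def P_def using assms by simp
  show ?thesis unfolding P_def[symmetric] q_def[symmetric] r_def[symmetric]
  proof
    assume ns: "z \<notin> interval_semigroup a b"
    show "0 < r \<and> r + q * b < a"
    proof (rule ccontr)
      assume "\<not> (0 < r \<and> r + q * b < a)"
      then consider "r = 0" | "a \<le> r + q*b" by linarith
      then show False
      proof cases
        case 1
        then have "q*a \<le> z \<and> z \<le> q*(a+b)" using z by (simp add: algebra_simps)
        then show False using ns mem_S by blast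
      next
        case 2
        then have "Suc q*a \<le> z \<and> z \<le> Suc q*(a+b)" using z rP by (simp add: algebra_simps)
        then show False using ns mem_S by blast
      qed
    qed
  next
    assume h: "0 < r \<and> r + q * b < a"
    show "z \<notin> interval_semigroup a b"
    proof
      assume "z \<in> interval_semigroup a b"
      then obtain n where n: "n*a \<le> z" "z \<le> n*(a+b)" using mem_S by blast
      show False
      proof (cases "n \<le> q")
        case True
        then have "n*a + n*b \<le> q*a + q*b"
          using add_le_mono mult_le_mono1 by blast
        then show False using n z h by (simp add: algebra_simps)
      next
        case False
        then have "Suc q * a \<le> n * a" using mult_le_mono1 by (simp del: mult_Suc)
        then show False using n z h by simp
      qed
    qed
  qed
qed



definition Yset :: "nat set \<Rightarrow> nat set \<Rightarrow> nat set" where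
  "Yset S J = {y. \<forall>j\<in>J. j \<le> y \<longrightarrow> y - j \<notin> S}"

lemma notS_I:
  assumes "0 < a" "0 < r" "r < a+b" "r + q*b < a"
  shows "q*(a+b) + r \<notin> interval_semigroup a b"
proof -
  have "(q*(a+b) + r) mod (a+b) = r" "(q*(a+b) + r) div (a+b) = q" using assms by auto
  then show ?thesis using notS[OF assms(1)] assms by simp
qed

lemma notS_D:
  assumes "0 < a" "z \<notin> interval_semigroup a b"
  shows "0 < z mod (a+b) \<and> z mod (a+b) + z div (a+b) * b < a"
  using notS[OF assms(1)] assms(2) by blast

lemma notS_bound:
  assumes "0 < b" "0 < a" "z \<notin> interval_semigroup a b"
  shows "z < a*(a+b)"
proof -
  define q where "q = z div (a+b)"
  have "q*b < a" using notS_D[OF assms(2,3)] q_def by simp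
  moreover have "a \<le> q \<Longrightarrow> a*1 \<le> q*b" using assms(1) by (intro mult_le_mono) auto
  ultimately have "q < a" by linarith
  then have "Suc q * (a+b) \<le> a*(a+b)" by (simp del: mult_Suc)
  moreover have "z < Suc q * (a+b)"
  proof -
    have "z = q*(a+b) + z mod (a+b)" unfolding q_def by (rule div_mult_mod_eq[symmetric])
    moreover have "z mod (a+b) < a+b" using assms by simp
    ultimately show ?thesis by simp
  qed
  ultimately show ?thesis by linarith
qed

lemma Yset_finite:
  assumes "0 < b" "0 < a" "0 \<in> J"
  shows "finite (Yset (interval_semigroup a b) J)"
proof -
  have "Yset (interval_semigroup a b) J \<subseteq> {..<a*(a+b)}"
    using notS_bound[OF assms(1,2)] assms(3) unfolding Yset_def by fastforce
  then show ?thesis using finite_subset by blast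
qed



lemma comb:
  fixes a b K t :: nat and J :: "nat set"
  assumes b0: "0 < b" and ba: "b < a" and JK: "J \<subseteq> {0..K}" and J0: "0 \<in> J"
    and KJ: "K \<in> J" and Kab: "K < a+b" and cJ: "card J = Suc t" and tK: "t \<le> K"
  shows "card (Yset (interval_semigroup a b) J)
     \<le> card (Yset (interval_semigroup a b) {0..t}) + (K - t)"
proof -
  define S where "S = interval_semigroup a b"
  define P where "P = a+b"
  have a0: "0 < a" using b0 ba by simp
  have P0: "0 < P" using a0 P_def by simp
  define Y where "Y = Yset S J"
  define Y0 where "Y0 = Yset S {0..t}"
  define H where "H = {0..K} - J"
  have finH: "finite H" unfolding H_def by simp
  have cH: "card H = K - t"
  proof -
    have "finite J" using JK finite_subset by blast
    then have "card H = card {0..K} - card J" unfolding H_def using card_Diff_subset JK by blast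
    then show ?thesis using cJ by simp
  qed
  define rk where "rk r = card {h\<in>H. h \<le> r}" for r
  define A where "A = {y\<in>Y. K < y mod P}"
  define B0 where "B0 = {y\<in>Y. y < P \<and> y mod P \<le> K}"
  define Bp where "Bp = {y\<in>Y. P \<le> y \<and> y mod P \<le> K}"
  define phi where "phi y = (if K < y mod P then y else (y div P - 1)*P + (t + rk (y mod P)))" for y
  have YU: "Y = (A \<union> Bp) \<union> B0" by (auto simp: A_def B0_def Bp_def)
  have finY: "finite Y" unfolding Y_def S_def using Yset_finite[OF b0 a0 J0] .
  have finY0: "finite Y0" unfolding Y0_def S_def using Yset_finite[OF b0 a0] by simp
  have yS: "y \<notin> S" if "y \<in> Y" for y using that J0 unfolding Y_def Yset_def by force
  have S0: "0 \<in> S" unfolding S_def using mem_S by fastforce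
  have rk_mono: "rk r1 < rk r2" if "r1 < r2" "r2 \<in> H" for r1 r2
  proof -
    have "r2 \<in> {h\<in>H. h \<le> r2}" "r2 \<notin> {h\<in>H. h \<le> r1}" using that by auto
    moreover have "{h\<in>H. h \<le> r1} \<subseteq> {h\<in>H. h \<le> r2}" using that by auto
    ultimately have "{h\<in>H. h \<le> r1} \<subset> {h\<in>H. h \<le> r2}" by blast
    moreover have "finite {h\<in>H. h \<le> r2}" using finH by simp
    ultimately show ?thesis unfolding rk_def by (rule psubset_card_mono[rotated])
  qed
  have Bp1: "1 \<le> y div P \<and> 1 \<le> rk (y mod P) \<and> t + rk (y mod P) + (y div P)*b \<le> K
        \<and> y mod P \<in> H" if y: "y \<in> Bp" for y
  proof -
    define q where "q = y div P"
    define r where "r = y mod P"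
    have yqr: "y = q*P + r" unfolding q_def r_def by simp
    have rP: "r < P" unfolding r_def using P0 by simp
    have rK: "r \<le> K" using y unfolding Bp_def r_def by simp
    have q1: "1 \<le> q"
    proof (rule ccontr)
      assume "\<not> 1 \<le> q" then have "q = 0" by simp
      then show False using yqr rP y unfolding Bp_def by simp
    qed
    have yY: "y \<in> Y" using y Bp_def by simp
    have ns: "0 < r \<and> r + q*b < a" using notS_D[OF a0 yS[OF yY, unfolded S_def]]
      unfolding r_def q_def P_def by simp
    have qPab: "q*P = q*a + q*b" unfolding P_def by (simp add: algebra_simps)
    have hJ: "h \<notin> J" if "r \<le> h" "h \<le> r + q*b" for h
    proof
      assume hJ: "h \<in> J"
      have "q*b \<le> q*P" unfolding P_def by simp
      then have hy: "h \<le> y" using that yqr by linarith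
      have "q*a \<le> y - h \<and> y - h \<le> q*(a+b)" using that yqr qPab unfolding P_def by (simp only:) linarith
      then have "y - h \<in> S" unfolding S_def using mem_S by blast
      moreover have "y - h \<notin> S" using yY hJ hy unfolding Y_def Yset_def by blast
      ultimately show False by blast
    qed
    have rqK: "r + q*b < K"
    proof (rule ccontr)
      assume "\<not> r + q*b < K"
      then show False using hJ[of K] rK KJ by simp
    qed
    have sub: "{r..r+q*b} \<subseteq> H" using hJ rqK unfolding H_def by auto
    have d: "{h\<in>H. h \<le> r} \<inter> {r+1..r+q*b} = {}" by auto
    have u: "{h\<in>H. h \<le> r} \<union> {r+1..r+q*b} \<subseteq> H" using sub by auto
    have "card ({h\<in>H. h \<le> r} \<union> {r+1..r+q*b}) = rk r + q*b"
      unfolding rk_def using d finH by (subst card_Un_disjoint) auto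
    moreover have "card ({h\<in>H. h \<le> r} \<union> {r+1..r+q*b}) \<le> card H"
      using u finH card_mono by blast
    ultimately have "rk r + q*b \<le> K - t" using cH by simp
    moreover have "1 \<le> rk r"
    proof -
      have "r \<in> {h\<in>H. h \<le> r}" using sub by auto
      then have "{h\<in>H. h \<le> r} \<noteq> {}" by blast
      then show ?thesis unfolding rk_def using finH by (simp add: Suc_leI card_gt_0_iff)
    qed
    moreover have "r \<in> H" using sub by auto
    ultimately show ?thesis using q1 tK unfolding q_def r_def by simp
  qed
  have phiBp: "phi y = (y div P - 1)*P + (t + rk (y mod P)) \<and> t + rk (y mod P) < P
     \<and> t + rk (y mod P) \<le> K" if y: "y \<in> Bp" for y
  proof -
    have "\<not> K < y mod P" using y Bp_def by simp
    moreover have "t + rk (y mod P) \<le> K" using Bp1[OF y] by linarith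
    ultimately show ?thesis unfolding phi_def using Kab P_def by simp
  qed
  have phiY0: "phi y \<in> Y0" if y: "y \<in> A \<union> Bp" for y
  proof (cases "y \<in> A")
    case True
    define q where "q = y div P"
    define r where "r = y mod P"
    have yqr: "y = q*P + r" unfolding q_def r_def by simp
    have rP: "r < P" unfolding r_def using P0 by simp
    have rK: "K < r" using True unfolding A_def r_def by simp
    have yY: "y \<in> Y" using True A_def by simp
    have ns: "0 < r \<and> r + q*b < a" using notS_D[OF a0 yS[OF yY, unfolded S_def]]
      unfolding r_def q_def P_def by simp
    have "y - j \<notin> S" if "j \<in> {0..t}" for j
    proof -
      have "y - j = q*(a+b) + (r - j)" using yqr that tK rK P_def by simp
      moreover have "q*(a+b) + (r - j) \<notin> S" unfolding S_def
        using notS_I[OF a0, of "r - j" b q] ns that tK rK rP P_def by simp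
      ultimately show ?thesis by simp
    qed
    moreover have "phi y = y" using rK unfolding phi_def r_def by simp
    ultimately show ?thesis unfolding Y0_def Yset_def by simp
  next
    case False
    then have yB: "y \<in> Bp" using y by simp
    define q where "q = y div P"
    define s where "s = t + rk (y mod P)"
    have "1 \<le> q" using Bp1[OF yB] unfolding q_def by blast
    then obtain q' where q': "q = Suc q'" using Suc_le_D by fastforce
    have sb: "s + q*b \<le> K" "1 \<le> rk (y mod P)" using Bp1[OF yB] unfolding s_def q_def by auto
    have pe: "phi y = q'*P + s" using phiBp[OF yB] q' unfolding q_def s_def by simp
    have "phi y - j \<notin> S" if "j \<in> {0..t}" for j
    proof -
      have "phi y - j = q'*(a+b) + (s - j)" using pe that s_def P_def sb by auto
      moreover have "q'*(a+b) + (s - j) \<notin> S" unfolding S_def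
      proof (rule notS_I[OF a0])
        show "0 < s - j" using that s_def sb by auto
        show "s - j < a + b" using sb Kab by linarith
        show "s - j + q'*b < a" using sb Kab q' by simp
      qed
      ultimately show ?thesis by simp
    qed
    then show ?thesis unfolding Y0_def Yset_def by simp
  qed
  have inj: "inj_on phi (A \<union> Bp)"
  proof
    fix x y assume x: "x \<in> A \<union> Bp" and y: "y \<in> A \<union> Bp" and e: "phi x = phi y"
    have modB: "phi z mod P \<le> K \<and> phi z div P = z div P - 1 \<and> phi z mod P = t + rk (z mod P)"
      if "z \<in> Bp" for z
      using phiBp[OF that] by simp
    have modA: "phi z = z \<and> K < z mod P" if "z \<in> A" for z
      using that unfolding A_def phi_def by simp
    show "x = y"
    proof (cases "x \<in> A")
      case xA: True
      show ?thesis
      proof (cases "y \<in> A")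
        case True then show ?thesis using modA xA e by simp
      next
        case False then have "y \<in> Bp" using y by simp
        then show ?thesis using modA[OF xA] modB e by fastforce
      qed
    next
      case False then have xB: "x \<in> Bp" using x by simp
      show ?thesis
      proof (cases "y \<in> A")
        case True then show ?thesis using modA modB[OF xB] e by fastforce
      next
        case False then have yB: "y \<in> Bp" using y by simp
        have dq: "x div P - 1 = y div P - 1" using modB[OF xB] modB[OF yB] e by metis
        have "rk (x mod P) = rk (y mod P)" using modB[OF xB] modB[OF yB] e by simp
        then have "x mod P = y mod P" using rk_mono Bp1[OF xB] Bp1[OF yB]
          by (metis less_irrefl nat_neq_iff)
        moreover have "x div P = y div P"
        proof -
          have "1 \<le> x div P" "1 \<le> y div P" using Bp1[OF xB] Bp1[OF yB] by blast+
          then show ?thesis using dq by linarith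
        qed
        ultimately show ?thesis by (metis div_mult_mod_eq)
      qed
    qed
  qed
  have c1: "card (A \<union> Bp) \<le> card Y0"
    using card_inj_on_le[OF inj _ finY0] phiY0 by blast
  have B0H: "B0 \<subseteq> H"
  proof
    fix y assume y: "y \<in> B0"
    then have yK: "y \<le> K" "y mod P = y" unfolding B0_def by auto
    have "y \<notin> J"
    proof
      assume "y \<in> J"
      then have "y - y \<notin> S" using y unfolding B0_def Y_def Yset_def by blast
      then show False using S0 by simp
    qed
    then show "y \<in> H" using yK unfolding H_def by simp
  qed
  have c2: "card B0 \<le> card H" using card_mono[OF finH B0H] .
  have "card Y \<le> card (A \<union> Bp) + card B0" unfolding YU by (rule card_Un_le)
  then show ?thesis using c1 c2 cH unfolding Y_def Y0_def S_def by linarith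
qed



lemma decomp:
  fixes S :: "nat set" and c m K t :: nat and i :: "nat \<Rightarrow> nat"
  assumes h1: "\<And>z. z \<notin> S \<Longrightarrow> z < c" and h2: "\<And>z. c \<le> z \<Longrightarrow> z \<in> S"
    and hm: "2*c \<le> m+1" and hi: "\<And>k. k \<le> t \<Longrightarrow> i k \<le> K" and i0: "i 0 = 0"
  shows "card (Dmulti S ((\<lambda>k. m + i k) ` {0..t})) + card (-S)
     + card (Yset S ((\<lambda>k. K - i k) ` {0..t})) = m + K + 1"
proof -
  define D where "D = Dmulti S ((\<lambda>k. m + i k) ` {0..t})"
  define J where "J = (\<lambda>k. K - i k) ` {0..t}"
  define Y where "Y = Yset S J"
  define E where "E = (\<lambda>y. m + K - y) ` Y"
  have Dmem: "\<alpha> \<in> D \<longleftrightarrow> (\<exists>k\<in>{0..t}. \<alpha> \<in> S \<and> \<alpha> \<le> m + i k \<and> m + i k - \<alpha> \<in> S)" for \<alpha>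
    unfolding D_def Dmulti_def Dset_def by auto
  have KJ: "K \<in> J" unfolding J_def using i0 by force
  have Yb: "y < K + c" if "y \<in> Y" for y
  proof (cases "K \<le> y")
    case True
    then have "y - K \<notin> S" using that KJ unfolding Y_def Yset_def by blast
    then show ?thesis using h1 True by fastforce
  next
    case False then show ?thesis by simp
  qed
  have Yb2: "y \<le> m + K \<and> c \<le> m + K - y" if "y \<in> Y" for y using Yb[OF that] hm by linarith
  have finN: "finite (-S)" using h1 by (meson finite_lessThan finite_subset lessThan_iff subsetI ComplD)
  have finY: "finite Y" using Yb by (meson finite_lessThan finite_subset lessThan_iff subsetI)
  have cE: "card E = card Y" unfolding E_def
  proof (rule card_image, rule inj_onI)
    fix x y assume "x \<in> Y" "y \<in> Y" "m + K - x = m + K - y"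
    then show "x = y" using Yb2[of x] Yb2[of y] by linarith
  qed
  have finE: "finite E" unfolding E_def using finY by simp
  have finD: "finite D" using Dmem by (meson finite_atLeastAtMost finite_subset subsetI atLeastAtMost_iff zero_le
        le_trans le_add1 add_le_mono order_refl hi)
  have DU: "D \<union> (-S) \<union> E = {0..m+K}"
  proof
    show "D \<union> (-S) \<union> E \<subseteq> {0..m+K}"
    proof
      fix x assume "x \<in> D \<union> (-S) \<union> E"
      then consider "x \<in> D" | "x \<notin> S" | "x \<in> E" by blast
      then show "x \<in> {0..m+K}"
      proof cases
        case 1 then obtain k where "k \<le> t" "x \<le> m + i k" using Dmem by auto
        then show ?thesis using hi[of k] by simp
      next
        case 2 then show ?thesis using h1[of x] hm by simp
      next
        case 3 then show ?thesis unfolding E_def by auto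
      qed
    qed
  next
    show "{0..m+K} \<subseteq> D \<union> (-S) \<union> E"
    proof
      fix x assume x: "x \<in> {0..m+K}"
      show "x \<in> D \<union> (-S) \<union> E"
      proof (cases "x \<in> S \<and> x \<notin> D")
        case True
        have "m + K - x \<in> Y" unfolding Y_def Yset_def J_def
        proof (intro CollectI ballI impI)
          fix j assume j: "j \<in> (\<lambda>k. K - i k) ` {0..t}" and jl: "j \<le> m + K - x"
          then obtain k where k: "k \<in> {0..t}" "j = K - i k" by blast
          have ik: "i k \<le> K" using hi k by simp
          have "x \<le> m + i k" using jl k ik x by simp
          moreover have "m + K - x - j = m + i k - x" using k ik x jl by simp
          ultimately show "m + K - x - j \<notin> S" using True Dmem k by auto
        qed
        moreover have "x = m + K - (m + K - x)" using x by simp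
        ultimately have "x \<in> E" unfolding E_def by blast
        then show ?thesis by blast
      next
        case False then show ?thesis by blast
      qed
    qed
  qed
  have d1: "D \<inter> (-S) = {}" using Dmem by blast
  have ES: "E \<subseteq> S" unfolding E_def using Yb2 h2 by blast
  have d2: "(D \<union> (-S)) \<inter> E = {}"
  proof -
    have "D \<inter> E = {}"
    proof (rule ccontr)
      assume "D \<inter> E \<noteq> {}"
      then obtain y where y: "y \<in> Y" "m + K - y \<in> D" unfolding E_def by blast
      then obtain k where k: "k \<in> {0..t}" "m + K - y \<le> m + i k" "m + i k - (m + K - y) \<in> S"
        using Dmem by blast
      have ik: "i k \<le> K" using hi k by simp
      have yb: "y \<le> m + K" using Yb2 y by simp
      have "K - i k \<in> J" unfolding J_def using k by blast
      moreover have "K - i k \<le> y" using k ik yb by simp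
      moreover have "y - (K - i k) = m + i k - (m + K - y)" using k ik yb by simp
      ultimately show False using y k unfolding Y_def Yset_def by auto
    qed
    then show ?thesis using ES by blast
  qed
  have "card {0..m+K} = card D + card (-S) + card E"
    unfolding DU[symmetric]
    by (subst card_Un_disjoint) (use finD finN finE d1 d2 in \<open>auto simp: card_Un_disjoint\<close>)
  then show ?thesis using cE unfolding D_def Y_def J_def by simp
qed



theorem lemma4p12:
  fixes a b m t :: nat and i :: "nat \<Rightarrow> nat"
  assumes "0 < b" and "b < a"
    and "m \<ge> 2 * conductor (interval_semigroup a b) - 1"
    and "i 0 = 0"
    and "\<And>k. k < t \<Longrightarrow> i k < i (Suc k)"
    and "i t < a + b"
  shows "card (Dmulti (interval_semigroup a b) ((\<lambda>k. m + i k) ` {0..t}))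
       \<ge> card (Dmulti (interval_semigroup a b) ((\<lambda>k. m + k) ` {0..t}))"
proof -
  define S where "S = interval_semigroup a b"
  define c where "c = conductor S"
  have a0: "0 < a" using assms by simp
  have big: "z \<in> S" if "a*(a+b) \<le> z" for z
    using notS_bound[OF assms(1) a0, of z] that unfolding S_def by linarith
  have ex: "\<exists>c. c \<in> S \<and> (\<forall>n. c + n \<in> S)"
    by (rule exI[of _ "a*(a+b)"]) (auto intro: big)
  have cS: "c \<in> S \<and> (\<forall>n. c + n \<in> S)" unfolding c_def conductor_def
    by (rule LeastI_ex[OF ex])
  have h2: "z \<in> S" if "c \<le> z" for z using cS that by (metis le_add_diff_inverse)
  have h1: "z < c" if "z \<notin> S" for z using h2 that by (meson not_le)
  have hm: "2*c \<le> m+1" using assms(3) unfolding c_def S_def by linarith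
  have mono: "i k + (l - k) \<le> i l" if "k \<le> l" "l \<le> t" for k l
    using that
  proof (induction l)
    case 0 then show ?case by simp
  next
    case (Suc l)
    show ?case
    proof (cases "k = Suc l")
      case True then show ?thesis by simp
    next
      case False
      then have "k \<le> l" using Suc.prems by simp
      then have "i k + (l - k) \<le> i l" using Suc by simp
      moreover have "i l < i (Suc l)" using assms(5) Suc.prems by simp
      ultimately show ?thesis using \<open>k \<le> l\<close> by simp
    qed
  qed
  define K where "K = i t"
  have hi: "i k \<le> K" if "k \<le> t" for k using mono[OF that order_refl] K_def by simp
  have tK: "t \<le> K" using mono[of 0 t] assms(4) K_def by simp
  define J where "J = (\<lambda>k. K - i k) ` {0..t}"
  have D1: "card (Dmulti S ((\<lambda>k. m + i k) ` {0..t})) + card (-S) + card (Yset S J) = m + K + 1"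
    unfolding J_def by (rule decomp[where S=S and c=c and i=i and t=t and K=K, OF h1 h2 hm hi assms(4)])
  have D2: "card (Dmulti S ((\<lambda>k. m + id k) ` {0..t})) + card (-S)
      + card (Yset S ((\<lambda>k. t - id k) ` {0..t})) = m + t + 1"
    by (rule decomp[where S=S and c=c and i=id and t=t and K=t, OF h1 h2 hm]) auto
  have Jid: "(\<lambda>k. t - id k) ` {0..t} = {0..t}"
  proof
    show "(\<lambda>k. t - id k) ` {0..t} \<subseteq> {0..t}" by auto
    show "{0..t} \<subseteq> (\<lambda>k. t - id k) ` {0..t}"
    proof
      fix x assume "x \<in> {0..t}"
      then have "x = t - id (t - x)" "t - x \<in> {0..t}" by auto
      then show "x \<in> (\<lambda>k. t - id k) ` {0..t}" by blast
    qed
  qed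
  have injJ: "inj_on (\<lambda>k. K - i k) {0..t}"
  proof (rule inj_onI)
    fix x y assume x: "x \<in> {0..t}" and y: "y \<in> {0..t}" and e: "K - i x = K - i y"
    have "i x \<le> K" "i y \<le> K" using hi x y by auto
    then have "i x = i y" using e by linarith
    show "x = y"
    proof (rule ccontr)
      assume "x \<noteq> y"
      then consider "x < y" | "y < x" by linarith
      then show False
      proof cases
        case 1 then show False using mono[of x y] y \<open>i x = i y\<close> by simp
      next
        case 2 then show False using mono[of y x] x \<open>i x = i y\<close> by simp
      qed
    qed
  qed
  have C: "card (Yset S J) \<le> card (Yset S {0..t}) + (K - t)"
    unfolding S_def
  proof (rule comb[OF assms(1,2)])
    show "J \<subseteq> {0..K}" unfolding J_def by auto
    show "0 \<in> J" unfolding J_def using K_def by force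
    show "K \<in> J" unfolding J_def using assms(4) by force
    show "K < a + b" using assms(6) K_def by simp
    show "card J = Suc t" unfolding J_def using card_image[OF injJ] by simp
    show "t \<le> K" by (rule tK)
  qed
  have "card (Dmulti S ((\<lambda>k. m + k) ` {0..t})) \<le> card (Dmulti S ((\<lambda>k. m + i k) ` {0..t}))"
    using D1 D2 C tK unfolding Jid by simp
  then show ?thesis unfolding S_def .
qed


end
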